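(* Let $H$ be a finite-dimensional complex Hilbert space and let $\mathcal{Pos}(H)$ be the set of positive operators on $H$ (linear $A\colon H\to H$ with $\langle Ax,x\rangle\geq 0$ for all $x\in H$). Then $\mathcal{Pos}(H)$ is a module over the semiring $\mathbb{R}_{\geq 0}$ of non-negative reals, and the map $$\mathrm{hs}_{\mathcal{Pos}}\colon\mathcal{Pos}(H)\longrightarrow\mathcal{Pos}(H)^{*}=\big(\mathcal{Pos}(H)\multimap\mathbb{R}_{\geq0}\big),\qquad \mathrm{hs}_{\mathcal{Pos}}(A)(B)=\mathrm{tr}(AB),$$ is a well-defined isomorphism in $\mathbf{Mod}_{\mathbb{R}_{\geq0}}$, natural in $H$ in the sense that for every linear map $C\colon H\to K$ between finite-dimensional Hilbert spaces, $\mathcal{Pos}(C)^{*}\circ\mathrm{hs}_{\mathcal{Pos},K}=\mathrm{hs}_{\mathcal{Pos},H}\circ\mathcal{Pos}(C^\dagger)$, where $\mathcal{Pos}(C)^*(f)=f\circ\mathcal{Pos}(C)$. Moreover, the functors $\mathcal{Pos}\colon\mathbf{FdHilb}\to\mathbf{Mod}_{\mathbb{R}_{\geq0}}$ and $\mathcal{Pos}\colon\mathbf{FdHilb}^{\mathrm{op}}\to\mathbf{Mod}_{\mathbb{R}_{\geq0}}^{\mathrm{op}}$ together with these isomorphisms form a map of adjunctions (in the sense of Mac Lane, IV.7, with functor squares commuting up to the isomorphisms $\mathrm{hs}_{\mathcal{Pos}}$) from the adjunction $(-)^{\dagger}\dashv(-)^{\dagger}$ between $\mathbf{FdHilb}$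 and $\mathbf{FdHilb}^{\mathrm{op}}$ to the adjunction $((-)\multimap\mathbb{R}_{\geq0})\dashv((-)\multimap\mathbb{R}_{\geq0})$ between $\mathbf{Mod}_{\mathbb{R}_{\geq0}}$ and $\mathbf{Mod}_{\mathbb{R}_{\geq0}}^{\mathrm{op}}$.
   Context: A module over a commutative semiring $S$ is a commutative monoid with a scalar multiplication $S\times M\to M$ that is additive in each argument, satisfies $1\bullet x=x$ and $(st)\bullet x=s\bullet(t\bullet x)$; $\mathbf{Mod}_S$ is the category of $S$-modules and $S$-linear maps, and $M\multimap N$ is the $S$-module of linear maps $M\to N$. The functor $(-)\multimap\mathbb{R}_{\geq0}\colon\mathbf{Mod}_{\mathbb{R}_{\geq0}}\to\mathbf{Mod}_{\mathbb{R}_{\geq0}}^{\mathrm{op}}$ (precomposition on maps) is adjoint to itself via swapping arguments. $\mathbf{FdHilb}$ is the category of finite-dimensional complex Hilbert spaces and linear maps; $C^\dagger$ is the adjoint of $C$; $(-)^\dagger\colon\mathbf{FdHilb}\to\mathbf{FdHilb}^{\mathrm{op}}$ is identity on objects, $C\mapsto C^\dagger$ on maps, and is self-adjoint. The functor $\mathcal{Pos}$ sends $C\colon H\to K$ to $\mathcal{Pos}(C)(A)=CAC^{\dagger}$. $\mathrm{tr}$ is the trace. *)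

theory Defs
  imports "Jordan_Normal_Form.Schur_Decomposition"
begin

text \<open>Finite-dimensional complex Hilbert spaces are modelled (up to unitary isomorphism)
  as the spaces C^n with the standard inner product; linear maps C^n -> C^m are
  complex m x n matrices; the adjoint is the conjugate transpose (mat_adjoint).\<close>

definition hinner :: "complex vec \<Rightarrow> complex vec \<Rightarrow> complex" where
  "hinner u v = (\<Sum>i<dim_vec v. u $ i * cnj (v $ i))"

definition mtrace :: "complex mat \<Rightarrow> complex" where
  "mtrace A = (\<Sum>i<dim_row A. A $$ (i, i))"

definition Pos :: "nat \<Rightarrow> complex mat set" where
  "Pos n = {A \<in> carrier_mat n n. \<forall>x \<in> carrier_vec n.
             Im (hinner (A *\<^sub>v x) x) = 0 \<and> 0 \<le> Re (hinner (A *\<^sub>v x) x)}"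

definition rsmult :: "real \<Rightarrow> complex mat \<Rightarrow> complex mat" where
  "rsmult r A = complex_of_real r \<cdot>\<^sub>m A"

text \<open>The dual module Pos(n) -o R>=0: R>=0-linear maps Pos(n) -> R>=0, represented
  extensionally (value 0 outside Pos n).\<close>
definition Pos_dual :: "nat \<Rightarrow> (complex mat \<Rightarrow> real) set" where
  "Pos_dual n = {f. (\<forall>A \<in> Pos n. 0 \<le> f A)
     \<and> (\<forall>A \<in> Pos n. \<forall>B \<in> Pos n. f (A + B) = f A + f B)
     \<and> (\<forall>r \<ge> 0. \<forall>A \<in> Pos n. f (rsmult r A) = r * f A)
     \<and> (\<forall>A. A \<notin> Pos n \<longrightarrow> f A = 0)}"

text \<open>hs_Pos(A)(B) = tr(AB) (the trace is shown to be real, see the theorem).\<close>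
definition hs :: "nat \<Rightarrow> complex mat \<Rightarrow> complex mat \<Rightarrow> real" where
  "hs n A = (\<lambda>B. if B \<in> Pos n then Re (mtrace (A * B)) else 0)"

definition PosMap :: "complex mat \<Rightarrow> complex mat \<Rightarrow> complex mat" where
  "PosMap C A = C * A * mat_adjoint C"

definition dualmap :: "nat \<Rightarrow> (complex mat \<Rightarrow> 'b) \<Rightarrow> ('b \<Rightarrow> real)
                         \<Rightarrow> complex mat \<Rightarrow> real" where
  "dualmap n g f = (\<lambda>B. if B \<in> Pos n then f (g B) else 0)"

definition ev :: "nat \<Rightarrow> complex mat \<Rightarrow> (complex mat \<Rightarrow> real) \<Rightarrow> real" where
  "ev n A = (\<lambda>f. if f \<in> Pos_dual n then f A else 0)"

end

theory Submission
  imports Defs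
begin

definition qf :: "nat \<Rightarrow> complex mat \<Rightarrow> (nat \<Rightarrow> complex) \<Rightarrow> complex" where
 "qf n A x = (\<Sum>i<n. \<Sum>j<n. A$$(i,j) * x j * cnj (x i))"

lemma hinner_qf: assumes "A \<in> carrier_mat n n"
  shows "hinner (A *\<^sub>v vec n x) (vec n x) = qf n A x"
  using assms unfolding hinner_def qf_def
  by (auto simp: mult_mat_vec_def scalar_prod_def atLeast0LessThan sum_distrib_left mult.commute mult.left_commute)

lemma if_mult0: "(if P then a else 0) * b = (if P then a*b else (0::'a::mult_zero))"
  "b * (if P then a else 0) = (if P then b*a else 0)" by auto

lemma sum_if_cond: "(\<Sum>j\<in>S. if P then f j else 0) = (if P then sum f S else 0)"
  by simp

lemma Pos_iff: "A \<in> Pos n \<longleftrightarrow> A \<in> carrier_mat n n \<and> (\<forall>x::nat\<Rightarrow>complex. Im (qf n A x) = 0 \<and> 0 \<le> Re (qf n A x))"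
proof
  assume A: "A \<in> Pos n"
  then have c: "A \<in> carrier_mat n n" by (simp add: Pos_def)
  show "A \<in> carrier_mat n n \<and> (\<forall>x::nat\<Rightarrow>complex. Im (qf n A x) = 0 \<and> 0 \<le> Re (qf n A x))"
  proof (intro conjI allI c)
    fix x :: "nat \<Rightarrow> complex"
    have v: "vec n x \<in> carrier_vec n" by simp
    have "Im (hinner (A *\<^sub>v vec n x) (vec n x)) = 0 \<and> 0 \<le> Re (hinner (A *\<^sub>v vec n x) (vec n x))"
      using A v unfolding Pos_def by blast
    then show "Im (qf n A x) = 0" "0 \<le> Re (qf n A x)" using hinner_qf[OF c, of x] by auto
  qed
next
  assume A: "A \<in> carrier_mat n n \<and> (\<forall>x::nat\<Rightarrow>complex. Im (qf n A x) = 0 \<and> 0 \<le> Re (qf n A x))"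
  show "A \<in> Pos n" unfolding Pos_def
  proof (intro CollectI conjI ballI)
    fix v :: "complex vec" assume v: "v \<in> carrier_vec n"
    then have "v = vec n (\<lambda>i. v $ i)" by auto
    then have "hinner (A *\<^sub>v v) v = qf n A (\<lambda>i. v $ i)" using hinner_qf[of A n] A by metis
    then show "Im (hinner (A *\<^sub>v v) v) = 0" "0 \<le> Re (hinner (A *\<^sub>v v) v)" using A by auto
  qed (use A in auto)
qed

lemma qf_add: assumes "A \<in> carrier_mat n n" "B \<in> carrier_mat n n"
  shows "qf n (A+B) x = qf n A x + qf n B x"
proof -
  have "qf n (A+B) x = (\<Sum>i<n. \<Sum>j<n. A$$(i,j) * x j * cnj (x i) + B$$(i,j) * x j * cnj (x i))"
    using assms by (auto simp: qf_def algebra_simps intro!: sum.cong)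
  then show ?thesis by (simp add: qf_def sum.distrib)
qed

lemma qf_smult: assumes "A \<in> carrier_mat n n"
  shows "qf n (c \<cdot>\<^sub>m A) x = c * qf n A x"
  using assms by (auto simp: qf_def algebra_simps sum_distrib_left intro!: sum.cong)

lemma qf_one: assumes "i < n"
  shows "qf n A (\<lambda>l. if l = i then a else 0) = A$$(i,i) * a * cnj a"
proof -
  have "\<And>ia. (\<Sum>j<n. A$$(ia,j) * (if j=i then a else 0) * cnj (if ia = i then a else 0)) = (if ia = i then A$$(i,i)*a*cnj a else 0)"
    using assms by (simp add: if_mult0 sum_if_cond)
  then show ?thesis using assms by (simp add: qf_def)
qed

lemma qf_shift: assumes k: "k < n"
  shows "qf n A (\<lambda>l. x l - (if l = k then t else 0)) = qf n A x - cnj t * (\<Sum>j<n. A$$(k,j) * x j)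
     - t * (\<Sum>i<n. A$$(i,k) * cnj (x i)) + t * cnj t * A$$(k,k)"
proof -
  have "qf n A (\<lambda>l. x l - (if l = k then t else 0)) = (\<Sum>i<n. \<Sum>j<n. A$$(i,j)*x j*cnj(x i)
     - (if i=k then cnj t * (A$$(i,j)*x j) else 0) - (if j = k then t*(A$$(i,j)*cnj(x i)) else 0)
     + (if i=k then (if j=k then t*cnj t*A$$(i,j) else 0) else 0))"
    by (auto simp: qf_def algebra_simps intro!: sum.cong)
  also have "\<dots> = qf n A x - cnj t * (\<Sum>j<n. A$$(k,j) * x j)
     - t * (\<Sum>i<n. A$$(i,k) * cnj (x i)) + t * cnj t * A$$(k,k)"
    using k by (simp add: qf_def sum.distrib sum_subtractf sum_distrib_left sum_if_cond)
  finally show ?thesis .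
qed

lemma Pos_herm: assumes A: "A \<in> Pos n" and i: "i < n" and j: "j < n"
  shows "A$$(j,i) = cnj (A$$(i,j))"
proof -
  have P: "\<And>x. Im (qf n A x) = 0" using A by (simp add: Pos_iff)
  have dj: "Im (A$$(j,j)) = 0" using P[of "\<lambda>l. if l = j then 1 else 0"] qf_one[OF j, of A 1] by simp
  have di: "Im (A$$(i,i)) = 0" using P[of "\<lambda>l. if l = i then 1 else 0"] qf_one[OF i, of A 1] by simp
  let ?x = "\<lambda>l. if l = i then (1::complex) else 0"
  have e: "(\<lambda>l. ?x l - (if l = j then t else 0)) = (\<lambda>l. ?x l - (if l = j then t else 0))" for t by simp
  have s1: "(\<Sum>l<n. A$$(j,l) * ?x l) = A$$(j,i)" using i by (simp add: if_distrib cong: if_cong)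
  have s2: "(\<Sum>l<n. A$$(l,j) * cnj (?x l)) = A$$(i,j)" using i by (simp add: if_distrib cong: if_cong)
  have q0: "qf n A ?x = A$$(i,i)" using qf_one[OF i, of A 1] by simp
  have h: "Im (A$$(i,i) - cnj t * A$$(j,i) - t * A$$(i,j) + t * cnj t * A$$(j,j)) = 0" for t
    using P[of "\<lambda>l. ?x l - (if l = j then t else 0)"] qf_shift[OF j, of A ?x t] s1 s2 q0 by simp
  have h1: "Im (A$$(j,i) + A$$(i,j)) = 0" using h[of 1] di dj by simp
  have h2: "Re (A$$(j,i) - A$$(i,j)) = 0" using h[of "\<i>"] di dj by simp
  show ?thesis using h1 h2 by (simp add: complex_eq_iff)
qed



definition herm :: "nat \<Rightarrow> complex mat \<Rightarrow> bool" where
  "herm n A \<longleftrightarrow> (\<forall>i<n. \<forall>j<n. A$$(j,i) = cnj (A$$(i,j)))"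

lemma Pos_herm': "A \<in> Pos n \<Longrightarrow> herm n A"
  using Pos_herm unfolding herm_def by blast

lemma herm_qf_real: assumes "herm n A" shows "Im (qf n A x) = 0"
proof -
  have "cnj (qf n A x) = (\<Sum>i<n. \<Sum>j<n. A$$(j,i) * x i * cnj (x j))"
    unfolding qf_def cnj_sum
  proof (intro sum.cong refl)
    fix i j assume "i \<in> {..<n}" "j \<in> {..<n}"
    then have "A$$(j,i) = cnj (A$$(i,j))" using assms unfolding herm_def by blast
    then have "cnj (A$$(i,j)) = A$$(j,i)" by simp
    then show "cnj (A $$ (i, j) * x j * cnj (x i)) = A$$(j,i) * x i * cnj (x j)" by simp
  qed
  also have "\<dots> = qf n A x" unfolding qf_def by (rule sum.swap)
  finally have "cnj (qf n A x) = qf n A x" .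
  from arg_cong[OF this, of Im] show ?thesis by simp
qed

lemma tr_mult: assumes "A \<in> carrier_mat a b" "B \<in> carrier_mat b a"
  shows "mtrace (A*B) = (\<Sum>i<a. \<Sum>j<b. A$$(i,j) * B$$(j,i))"
  using assms unfolding mtrace_def
  by (auto simp: scalar_prod_def atLeast0LessThan intro!: sum.cong)

lemma tr_comm: assumes "A \<in> carrier_mat a b" "B \<in> carrier_mat b a"
  shows "mtrace (A*B) = mtrace (B*A)"
  unfolding tr_mult[OF assms] tr_mult[OF assms(2,1)]
  by (subst sum.swap) (simp add: mult.commute)

definition outer :: "nat \<Rightarrow> (nat \<Rightarrow> complex) \<Rightarrow> complex mat" where
  "outer n c = mat n n (\<lambda>(i,j). c i * cnj (c j))"

lemma outer_carrier[simp]: "outer n c \<in> carrier_mat n n" by (simp add: outer_def)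

lemma outer_index[simp]: "i < n \<Longrightarrow> j < n \<Longrightarrow> outer n c $$ (i,j) = c i * cnj (c j)"
  by (simp add: outer_def)

lemma tr_outer: assumes "A \<in> carrier_mat n n" shows "mtrace (A * outer n c) = qf n A c"
  unfolding tr_mult[OF assms outer_carrier] qf_def by (auto intro!: sum.cong)

lemma qf_outer: "qf n (outer n c) x = (\<Sum>i<n. c i * cnj (x i)) * (\<Sum>j<n. cnj (c j) * x j)"
  unfolding qf_def sum_product by (auto simp: mult_ac intro!: sum.cong)

lemma cnj_self_pos: "Im (w * cnj w) = 0 \<and> 0 \<le> Re (w * cnj w)"
  by (simp add: complex_mult_cnj)

lemma outer_Pos: "outer n c \<in> Pos n"
proof -
  { fix x :: "nat \<Rightarrow> complex"
    define w where "w = (\<Sum>i<n. c i * cnj (x i))"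
    have "qf n (outer n c) x = w * cnj w" unfolding w_def qf_outer by (simp add: cnj_sum)
    then have "Im (qf n (outer n c) x) = 0 \<and> 0 \<le> Re (qf n (outer n c) x)"
      using cnj_self_pos[of w] by simp }
  then show ?thesis unfolding Pos_iff by auto
qed

lemma zero_Pos: "0\<^sub>m n n \<in> Pos n"
  unfolding Pos_iff by (simp add: qf_def)

lemma add_Pos: "A \<in> Pos n \<Longrightarrow> B \<in> Pos n \<Longrightarrow> A + B \<in> Pos n"
  unfolding Pos_iff by (simp add: qf_add)

lemma rsmult_Pos: "r \<ge> 0 \<Longrightarrow> A \<in> Pos n \<Longrightarrow> rsmult r A \<in> Pos n"
  unfolding Pos_iff rsmult_def by (simp add: qf_smult)

lemma Pos_carrier: "A \<in> Pos n \<Longrightarrow> A \<in> carrier_mat n n" by (simp add: Pos_def)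



lemma hermD: "herm n A \<Longrightarrow> i < n \<Longrightarrow> j < n \<Longrightarrow> A$$(j,i) = cnj (A$$(i,j))"
  unfolding herm_def by blast

lemma Pos_diag_real: "A \<in> Pos n \<Longrightarrow> i < n \<Longrightarrow> A$$(i,i) = complex_of_real (Re (A$$(i,i)))"
proof -
  assume a: "A \<in> Pos n" "i < n"
  have e: "A$$(i,i) = cnj (A$$(i,i))" using Pos_herm[OF a(1) a(2) a(2)] .
  have "Im (A$$(i,i)) = 0" using arg_cong[OF e, of Im] by simp
  then show ?thesis by (simp add: complex_eq_iff)
qed

lemma quad_lemma: fixes q W b :: real
  assumes h: "\<And>r. 0 \<le> q - 2*r*W + r^2*W*b" and W: "0 \<le> W" and b: "0 \<le> b"
  shows "W \<le> b*q"
proof (cases "b > 0")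
  case True
  have "0 \<le> q - 2*(1/b)*W + (1/b)^2*W*b" by (rule h)
  also have "\<dots> = q - W/b" using True by (simp add: power2_eq_square field_simps)
  finally show ?thesis using True by (simp add: field_simps)
next
  case False
  then have b0: "b = 0" using b by simp
  show ?thesis
  proof (rule ccontr)
    assume "\<not> W \<le> b*q"
    then have Wp: "W > 0" using b0 by simp
    have "0 \<le> q - 2*((q+1)/(2*W))*W + ((q+1)/(2*W))^2*W*b" by (rule h)
    also have "\<dots> = -1" using Wp b0 by (simp add: field_simps)
    finally show False by simp
  qed
qed

lemma CS: assumes B: "B \<in> Pos n" and k: "k < n"
  shows "(cmod (\<Sum>i<n. B$$(i,k) * cnj (x i)))^2 \<le> Re (B$$(k,k)) * Re (qf n B x)"
proof -
  define w where "w = (\<Sum>i<n. B$$(i,k) * cnj (x i))"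
  define W where "W = (cmod w)^2"
  have ww: "w * cnj w = complex_of_real W" unfolding W_def using complex_norm_square[of w] by simp
  have hk: "(\<Sum>j<n. B$$(k,j) * x j) = cnj w"
    unfolding w_def cnj_sum
  proof (intro sum.cong refl)
    fix j assume "j \<in> {..<n}"
    then have "B$$(k,j) = cnj (B$$(j,k))" using Pos_herm[OF B, of j k] k by simp
    then show "B$$(k,j) * x j = cnj (B$$(j,k) * cnj (x j))" by simp
  qed
  have bk: "B$$(k,k) = complex_of_real (Re (B$$(k,k)))" using Pos_diag_real[OF B k] .
  have P: "\<And>y. 0 \<le> Re (qf n B y)" using B by (simp add: Pos_iff)
  have "0 \<le> Re (qf n B x) - 2*r*W + r^2*W*Re (B$$(k,k))" for r
  proof -
    let ?t = "complex_of_real r * cnj w"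
    have "qf n B (\<lambda>l. x l - (if l = k then ?t else 0)) = qf n B x - cnj ?t * cnj w - ?t * w + ?t * cnj ?t * B$$(k,k)"
      using qf_shift[OF k, of B x ?t] hk unfolding w_def by simp
    also have "\<dots> = qf n B x - complex_of_real (2*r*W) + complex_of_real (r^2*W*Re (B$$(k,k)))"
      apply (subst bk)
      by (simp add: algebra_simps power2_eq_square ww[symmetric])
    finally show ?thesis using P[of "\<lambda>l. x l - (if l = k then ?t else 0)"] by simp
  qed
  then have "W \<le> Re (B$$(k,k)) * Re (qf n B x)"
  proof (rule quad_lemma)
    show "0 \<le> Re (B$$(k,k))" using P[of "\<lambda>l. if l = k then 1 else 0"] qf_one[OF k, of B 1] by simp
  qed (auto simp: W_def)
  then show ?thesis unfolding W_def w_def .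
qed

lemma tr_lin: assumes A: "A \<in> carrier_mat n n" and B: "B \<in> carrier_mat n n" and Ou: "Ou \<in> carrier_mat n n"
  shows "mtrace (A * (B + c \<cdot>\<^sub>m Ou)) = mtrace (A*B) + c * mtrace (A*Ou)"
proof -
  have BO: "B + c \<cdot>\<^sub>m Ou \<in> carrier_mat n n" using B Ou by simp
  show ?thesis unfolding tr_mult[OF A BO] tr_mult[OF A B] tr_mult[OF A Ou]
    using B Ou by (simp add: sum.distrib sum_distrib_left algebra_simps)
qed




lemma Pos_induct_aux:
  assumes base: "P (0\<^sub>m n n)"
    and step: "\<And>B c r. B \<in> Pos n \<Longrightarrow> P B \<Longrightarrow> 0 \<le> r \<Longrightarrow> P (B + rsmult r (outer n c))"
  shows "\<forall>B. B \<in> Pos n \<and> (\<forall>i<n. \<forall>j<n. (k \<le> i \<or> k \<le> j) \<longrightarrow> B$$(i,j) = 0) \<longrightarrow> P B"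
proof (induction k)
  case 0
  show ?case
  proof (intro allI impI)
    fix B assume B: "B \<in> Pos n \<and> (\<forall>i<n. \<forall>j<n. (0 \<le> i \<or> 0 \<le> j) \<longrightarrow> B$$(i,j) = 0)"
    have "B = 0\<^sub>m n n" using B Pos_carrier[of B n] by (intro eq_matI) auto
    then show "P B" using base by simp
  qed
next
  case (Suc k)
  show ?case
  proof (intro allI impI)
    fix B assume BB: "B \<in> Pos n \<and> (\<forall>i<n. \<forall>j<n. (Suc k \<le> i \<or> Suc k \<le> j) \<longrightarrow> B$$(i,j) = 0)"
    then have B: "B \<in> Pos n" and Z: "\<And>i j. i<n \<Longrightarrow> j<n \<Longrightarrow> Suc k \<le> i \<or> Suc k \<le> j \<Longrightarrow> B$$(i,j) = 0"
      by auto
    have Bc: "B \<in> carrier_mat n n" using B by (rule Pos_carrier)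
    show "P B"
    proof (cases "k < n")
      case False
      then have "\<forall>i<n. \<forall>j<n. (k \<le> i \<or> k \<le> j) \<longrightarrow> B$$(i,j) = 0" by auto
      then show ?thesis using Suc.IH B by blast
    next
      case k: True
      define \<beta> where "\<beta> = Re (B$$(k,k))"
      have bk: "B$$(k,k) = complex_of_real \<beta>" using Pos_diag_real[OF B k] unfolding \<beta>_def .
      have \<beta>0: "0 \<le> \<beta>" using B qf_one[OF k, of B 1] unfolding \<beta>_def Pos_iff
        by (metis complex_cnj_one mult.right_neutral)
      show ?thesis
      proof (cases "\<beta> = 0")
        case True
        have col: "B$$(i,k) = 0" if i: "i < n" for i
        proof -
          have "(cmod (\<Sum>l<n. B$$(l,k) * cnj (if l = i then 1 else 0)))^2 \<le> \<beta> * Re (qf n B (\<lambda>l. if l=i then 1 else 0))"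
            using CS[OF B k] unfolding \<beta>_def .
          moreover have "(\<Sum>l<n. B$$(l,k) * cnj (if l = i then 1 else 0)) = B$$(i,k)"
          proof -
            have "(\<lambda>l. B$$(l,k) * cnj (if l = i then 1 else 0)) = (\<lambda>l. if l = i then B$$(l,k) else 0)" by auto
            show ?thesis unfolding \<open>(\<lambda>l. B$$(l,k) * cnj (if l = i then 1 else 0)) = (\<lambda>l. if l = i then B$$(l,k) else 0)\<close> using i by simp
          qed
          ultimately show ?thesis using True by simp
        qed
        have row: "B$$(k,j) = 0" if "j<n" for j using Pos_herm[OF B that k] col[OF that] by simp
        have "\<forall>i<n. \<forall>j<n. (k \<le> i \<or> k \<le> j) \<longrightarrow> B$$(i,j) = 0"
        proof (intro allI impI)
          fix i j assume ij: "i<n" "j<n" "k \<le> i \<or> k \<le> j"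
          then consider "i = k" | "j = k" | "Suc k \<le> i \<or> Suc k \<le> j" by linarith
          then show "B$$(i,j) = 0" using row col Z ij by cases auto
        qed
        then show ?thesis using Suc.IH B by blast
      next
        case False
        then have \<beta>p: "\<beta> > 0" using \<beta>0 by simp
        have \<beta>c: "complex_of_real \<beta> \<noteq> 0" using \<beta>p by simp
        define c where "c = (\<lambda>l. B$$(l,k))"
        define B' where "B' = mat n n (\<lambda>(i,j). B$$(i,j) - c i * cnj (c j) / complex_of_real \<beta>)"
        have B'c: "B' \<in> carrier_mat n n" by (simp add: B'_def)
        have decomp: "B = B' + rsmult (1/\<beta>) (outer n c)"
          using Bc \<beta>p by (intro eq_matI) (auto simp: B'_def rsmult_def outer_def)
        have qfB': "qf n B' x = qf n B x - qf n (outer n c) x / complex_of_real \<beta>" for x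
        proof -
          have "qf n B' x = (\<Sum>i<n. \<Sum>j<n. B$$(i,j) * x j * cnj (x i) - outer n c $$ (i,j) * x j * cnj (x i) / complex_of_real \<beta>)"
            unfolding qf_def B'_def by (auto intro!: sum.cong simp: algebra_simps divide_inverse)
          then show ?thesis unfolding qf_def by (simp add: sum_subtractf sum_divide_distrib)
        qed
        have B'P: "B' \<in> Pos n" unfolding Pos_iff
        proof (intro conjI allI B'c)
          fix x :: "nat \<Rightarrow> complex"
          define w where "w = (\<Sum>i<n. c i * cnj (x i))"
          have cs: "(cmod w)^2 \<le> \<beta> * Re (qf n B x)" using CS[OF B k, of x] unfolding w_def c_def \<beta>_def .
          have "qf n (outer n c) x = w * cnj w" unfolding qf_outer w_def by (simp add: cnj_sum)
          also have "\<dots> = complex_of_real ((cmod w)^2)" by (rule complex_norm_square[symmetric])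
          finally have "qf n B' x = qf n B x - complex_of_real ((cmod w)^2 / \<beta>)" unfolding qfB' by simp
          moreover have "Im (qf n B x) = 0" "0 \<le> Re (qf n B x)" using B by (auto simp: Pos_iff)
          moreover have "(cmod w)^2 / \<beta> \<le> Re (qf n B x)" using cs \<beta>p by (simp add: field_simps)
          ultimately show "Im (qf n B' x) = 0" "0 \<le> Re (qf n B' x)" by auto
        qed
        have "\<forall>i<n. \<forall>j<n. (k \<le> i \<or> k \<le> j) \<longrightarrow> B'$$(i,j) = 0"
        proof (intro allI impI)
          fix i j assume ij: "i<n" "j<n" "k \<le> i \<or> k \<le> j"
          have e: "B'$$(i,j) = B$$(i,j) - c i * cnj (c j) / complex_of_real \<beta>" using ij by (simp add: B'_def)
          consider "i = k" | "j = k" | "Suc k \<le> i" | "Suc k \<le> j" using ij by linarith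
          then show "B'$$(i,j) = 0"
          proof cases
            case 1
            have "B$$(k,j) = cnj (B$$(j,k))" using Pos_herm[OF B ij(2) k] .
            then show ?thesis using e 1 bk \<beta>c by (simp add: c_def)
          next
            case 2
            then show ?thesis using e bk \<beta>c by (simp add: c_def)
          next
            case 3
            then show ?thesis using e Z[of i j] Z[of i k] ij k by (simp add: c_def)
          next
            case 4
            then show ?thesis using e Z[of i j] Z[of j k] ij k by (simp add: c_def)
          qed
        qed
        then have "P B'" using Suc.IH B'P by blast
        then show ?thesis unfolding decomp using step[OF B'P] \<beta>p by simp
      qed
    qed
  qed
qed

lemma Pos_induct:
  assumes "B \<in> Pos n" "P (0\<^sub>m n n)"
    and "\<And>B c r. B \<in> Pos n \<Longrightarrow> P B \<Longrightarrow> 0 \<le> r \<Longrightarrow> P (B + rsmult r (outer n c))"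
  shows "P B"
  using Pos_induct_aux[of P n n, OF assms(2,3)] assms(1) by auto

lemma tr_nonneg: assumes A: "A \<in> Pos n" and B: "B \<in> Pos n"
  shows "0 \<le> Re (mtrace (A * B))"
proof -
  have Ac: "A \<in> carrier_mat n n" using A by (rule Pos_carrier)
  show ?thesis
  proof (rule Pos_induct[where P="\<lambda>B. 0 \<le> Re (mtrace (A*B))", OF B])
    show "0 \<le> Re (mtrace (A * 0\<^sub>m n n))" unfolding tr_mult[OF Ac zero_carrier_mat] by simp
  next
    fix B c and r :: real assume B: "B \<in> Pos n" and IH: "0 \<le> Re (mtrace (A*B))" and r: "0 \<le> r"
    have "mtrace (A * (B + rsmult r (outer n c))) = mtrace (A*B) + complex_of_real r * qf n A c"
      unfolding rsmult_def tr_lin[OF Ac Pos_carrier[OF B] outer_carrier] tr_outer[OF Ac] ..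
    moreover have "0 \<le> Re (qf n A c)" using A by (simp add: Pos_iff)
    ultimately show "0 \<le> Re (mtrace (A * (B + rsmult r (outer n c))))" using IH r by simp
  qed
qed




definition lin_on :: "nat \<Rightarrow> (complex mat \<Rightarrow> real) \<Rightarrow> bool" where
  "lin_on n h \<longleftrightarrow> (\<forall>A\<in>Pos n. \<forall>B\<in>Pos n. h (A+B) = h A + h B) \<and> (\<forall>r\<ge>0. \<forall>A\<in>Pos n. h (rsmult r A) = r * h A)"

definition lincomb :: "nat \<Rightarrow> 'l set \<Rightarrow> ('l \<Rightarrow> real) \<Rightarrow> ('l \<Rightarrow> complex mat) \<Rightarrow> complex mat" where
  "lincomb n L a M = mat n n (\<lambda>(p,q). \<Sum>l\<in>L. complex_of_real (a l) * M l $$ (p,q))"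

lemma lin_on_zero: assumes "lin_on n h" shows "h (0\<^sub>m n n) = 0"
proof -
  have "h (0\<^sub>m n n + 0\<^sub>m n n) = h (0\<^sub>m n n) + h (0\<^sub>m n n)" using assms zero_Pos unfolding lin_on_def by blast
  then show ?thesis by simp
qed

lemma lincomb_Pos:
  assumes L: "finite L" and a: "\<And>l. l \<in> L \<Longrightarrow> 0 \<le> a l" and M: "\<And>l. l \<in> L \<Longrightarrow> M l \<in> Pos n"
    and h: "lin_on n h"
  shows "lincomb n L a M \<in> Pos n \<and> h (lincomb n L a M) = (\<Sum>l\<in>L. a l * h (M l))"
  using L a M
proof (induction L rule: finite_induct)
  case empty
  have "lincomb n {} a M = 0\<^sub>m n n" unfolding lincomb_def by (intro eq_matI) auto
  then show ?case using zero_Pos lin_on_zero[OF h] by simp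
next
  case (insert l L)
  have IH: "lincomb n L a M \<in> Pos n \<and> h (lincomb n L a M) = (\<Sum>l\<in>L. a l * h (M l))"
    using insert by auto
  have Ml: "M l \<in> Pos n" and al: "0 \<le> a l" using insert by auto
  have Mlc: "M l \<in> carrier_mat n n" using Ml by (rule Pos_carrier)
  have eq: "lincomb n (insert l L) a M = lincomb n L a M + rsmult (a l) (M l)"
    unfolding lincomb_def rsmult_def using insert(1,2) Mlc by (intro eq_matI) (auto simp: add.commute)
  have r: "rsmult (a l) (M l) \<in> Pos n" using rsmult_Pos[OF al Ml] .
  have "h (lincomb n (insert l L) a M) = h (lincomb n L a M) + a l * h (M l)"
    unfolding eq using h IH r al Ml unfolding lin_on_def by auto
  then show ?case unfolding eq using IH r add_Pos insert(1,2) by (simp add: add.commute)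
qed

lemma lin_rel:
  assumes L: "finite L" and M: "\<And>l. l \<in> L \<Longrightarrow> M l \<in> Pos n" and h: "lin_on n h"
    and X: "X \<in> Pos n" and XL: "X = lincomb n L \<alpha> M"
  shows "h X = (\<Sum>l\<in>L. \<alpha> l * h (M l))"
proof -
  define ap where "ap l = max (\<alpha> l) 0" for l
  define an where "an l = max (- \<alpha> l) 0" for l
  have P: "lincomb n L ap M \<in> Pos n \<and> h (lincomb n L ap M) = (\<Sum>l\<in>L. ap l * h (M l))"
    by (rule lincomb_Pos[OF L _ M h]) (simp add: ap_def)
  have N: "lincomb n L an M \<in> Pos n \<and> h (lincomb n L an M) = (\<Sum>l\<in>L. an l * h (M l))"
    by (rule lincomb_Pos[OF L _ M h]) (simp add: an_def)
  have split: "\<alpha> l = ap l - an l" for l unfolding ap_def an_def by auto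
  have "lincomb n L ap M = X + lincomb n L an M"
    unfolding XL lincomb_def
    by (intro eq_matI) (auto simp: split sum.distrib[symmetric] algebra_simps intro!: sum.cong)
  then have "h (lincomb n L ap M) = h X + h (lincomb n L an M)"
    using h X N unfolding lin_on_def by auto
  then show ?thesis using P N by (simp add: split left_diff_distrib sum_subtractf)
qed




definition evec :: "nat \<Rightarrow> nat \<Rightarrow> complex" where "evec i = (\<lambda>l. if l = i then 1 else 0)"
definition uvec :: "nat \<Rightarrow> nat \<Rightarrow> nat \<Rightarrow> complex" where "uvec i j = (\<lambda>l. evec i l + evec j l)"
definition vvec :: "nat \<Rightarrow> nat \<Rightarrow> nat \<Rightarrow> complex" where "vvec i j = (\<lambda>l. evec i l + \<i> * evec j l)"

definition Mf :: "nat \<Rightarrow> nat \<times> nat \<times> nat \<Rightarrow> complex mat" where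
  "Mf n = (\<lambda>(i,j,t). if t = 0 then outer n (uvec i j) else if t = 1 then outer n (evec i)
      else if t = 2 then outer n (evec j) else outer n (vvec i j))"

definition af :: "complex mat \<Rightarrow> nat \<times> nat \<times> nat \<Rightarrow> real" where
  "af X = (\<lambda>(i,j,t). if t = 0 then Re (X$$(i,j))/2 else if t = 3 then - Im (X$$(i,j))/2
      else (Im (X$$(i,j)) - Re (X$$(i,j)))/2)"

definition LL :: "nat \<Rightarrow> (nat \<times> nat \<times> nat) set" where "LL n = {..<n} \<times> {..<n} \<times> {..<4}"

lemma LL_finite: "finite (LL n)" by (simp add: LL_def)

lemma Mf_Pos: "Mf n l \<in> Pos n" unfolding Mf_def by (auto simp: outer_Pos split: prod.splits)

lemma sum_LL: "(\<Sum>l\<in>LL n. g l) = (\<Sum>i<n. \<Sum>j<n. g (i,j,0) + g (i,j,1) + g (i,j,2) + g (i,j,3))"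
proof -
  have f4: "{..<4::nat} = {0,1,2,3}" by auto
  have "(\<Sum>i<n. \<Sum>j<n. \<Sum>t\<in>{0,1,2,3::nat}. g (i,j,t)) = sum g (LL n)"
    unfolding LL_def f4 sum.cartesian_product by (simp add: case_prod_beta')
  then show ?thesis by (simp add: algebra_simps)
qed

lemma term_id: assumes p: "p < n" and q: "q < n" and i: "i < n" and j: "j < n"
  shows "(\<Sum>t\<in>{0,1,2,3::nat}. complex_of_real (af X (i,j,t)) * Mf n (i,j,t) $$ (p,q)) =
    (if i = p then (if j = q then complex_of_real (Re (X$$(i,j)))/2 + \<i> * complex_of_real (Im (X$$(i,j)))/2 else 0) else 0)
  + (if i = q then (if j = p then complex_of_real (Re (X$$(i,j)))/2 - \<i> * complex_of_real (Im (X$$(i,j)))/2 else 0) else 0)"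
  using p q apply (auto simp: af_def Mf_def evec_def uvec_def vvec_def complex_eq_iff algebra_simps)
  apply (simp_all add: field_simps)
  done

lemma X_lincomb: assumes X: "X \<in> Pos n" shows "X = lincomb n (LL n) (af X) (Mf n)"
proof (rule eq_matI)
  have Xc: "X \<in> carrier_mat n n" using X by (rule Pos_carrier)
  show "dim_row X = dim_row (lincomb n (LL n) (af X) (Mf n))" "dim_col X = dim_col (lincomb n (LL n) (af X) (Mf n))"
    using Xc by (auto simp: lincomb_def)
  fix p q assume "p < dim_row (lincomb n (LL n) (af X) (Mf n))" "q < dim_col (lincomb n (LL n) (af X) (Mf n))"
  then have p: "p < n" and q: "q < n" by (auto simp: lincomb_def)
  have "lincomb n (LL n) (af X) (Mf n) $$ (p,q) = (\<Sum>l\<in>LL n. complex_of_real (af X l) * Mf n l $$ (p,q))"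
    using p q by (simp add: lincomb_def)
  also have "\<dots> = (\<Sum>i<n. \<Sum>j<n. \<Sum>t\<in>{0,1,2,3::nat}. complex_of_real (af X (i,j,t)) * Mf n (i,j,t) $$ (p,q))"
    unfolding sum_LL by (simp add: algebra_simps)
  also have "\<dots> = (\<Sum>i<n. \<Sum>j<n.
    (if i = p then (if j = q then complex_of_real (Re (X$$(i,j)))/2 + \<i> * complex_of_real (Im (X$$(i,j)))/2 else 0) else 0)
  + (if i = q then (if j = p then complex_of_real (Re (X$$(i,j)))/2 - \<i> * complex_of_real (Im (X$$(i,j)))/2 else 0) else 0))"
    by (intro sum.cong refl) (rule term_id[OF p q], auto)
  also have "\<dots> = (complex_of_real (Re (X$$(p,q)))/2 + \<i> * complex_of_real (Im (X$$(p,q)))/2)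
     + (complex_of_real (Re (X$$(q,p)))/2 - \<i> * complex_of_real (Im (X$$(q,p)))/2)"
    using p q by (simp add: sum.distrib sum_if_cond)
  also have "\<dots> = X $$ (p,q)"
  proof -
    have "X$$(q,p) = cnj (X$$(p,q))" using Pos_herm[OF X p q] .
    then show ?thesis by (simp add: complex_eq_iff)
  qed
  finally show "X $$ (p,q) = lincomb n (LL n) (af X) (Mf n) $$ (p,q)" by simp
qed

lemma agree:
  assumes h1: "lin_on n h1" and h2: "lin_on n h2"
    and U: "\<And>i j. i < n \<Longrightarrow> j < n \<Longrightarrow> h1 (outer n (uvec i j)) = h2 (outer n (uvec i j))"
    and V: "\<And>i j. i < n \<Longrightarrow> j < n \<Longrightarrow> h1 (outer n (vvec i j)) = h2 (outer n (vvec i j))"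
    and W: "\<And>i. i < n \<Longrightarrow> h1 (outer n (evec i)) = h2 (outer n (evec i))"
    and X: "X \<in> Pos n"
  shows "h1 X = h2 X"
proof -
  have e: "h1 (Mf n l) = h2 (Mf n l)" if "l \<in> LL n" for l
    using that U V W unfolding LL_def Mf_def by (auto split: prod.splits)
  have "h1 X = (\<Sum>l\<in>LL n. af X l * h1 (Mf n l))" by (rule lin_rel[OF LL_finite Mf_Pos h1 X X_lincomb[OF X]])
  also have "\<dots> = (\<Sum>l\<in>LL n. af X l * h2 (Mf n l))" using e by simp
  also have "\<dots> = h2 X" by (rule lin_rel[OF LL_finite Mf_Pos h2 X X_lincomb[OF X], symmetric])
  finally show ?thesis .
qed




lemma tr_add: assumes A: "A \<in> carrier_mat n n" and B: "B \<in> carrier_mat n n" and C: "C \<in> carrier_mat n n"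
  shows "mtrace (A * (B + C)) = mtrace (A*B) + mtrace (A*C)"
proof -
  have BC: "B + C \<in> carrier_mat n n" using B C by simp
  show ?thesis unfolding tr_mult[OF A BC] tr_mult[OF A B] tr_mult[OF A C]
    using B C by (simp add: sum.distrib algebra_simps)
qed

lemma tr_smult: assumes A: "A \<in> carrier_mat n n" and B: "B \<in> carrier_mat n n"
  shows "mtrace (A * (c \<cdot>\<^sub>m B)) = c * mtrace (A*B)"
proof -
  have cB: "c \<cdot>\<^sub>m B \<in> carrier_mat n n" using B by simp
  show ?thesis unfolding tr_mult[OF A cB] tr_mult[OF A B]
    using B by (simp add: sum_distrib_left algebra_simps)
qed

lemma trace_lin_on: assumes A: "A \<in> carrier_mat n n" shows "lin_on n (\<lambda>X. Re (mtrace (A*X)))"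
  unfolding lin_on_def rsmult_def
  using tr_add[OF A] tr_smult[OF A] Pos_carrier by auto

lemma qf_pair: assumes i: "i < n" and j: "j < n"
  shows "qf n A (\<lambda>l. evec i l - (if l = j then t else 0)) = A$$(i,i) - cnj t * A$$(j,i) - t * A$$(i,j) + t * cnj t * A$$(j,j)"
proof -
  have s1: "(\<Sum>l<n. A$$(j,l) * evec i l) = A$$(j,i)"
  proof -
    have e: "(\<lambda>l. A$$(j,l) * evec i l) = (\<lambda>l. if l = i then A$$(j,l) else 0)" by (auto simp: evec_def)
    show ?thesis unfolding e using i by simp
  qed
  have s2: "(\<Sum>l<n. A$$(l,j) * cnj (evec i l)) = A$$(i,j)"
  proof -
    have e: "(\<lambda>l. A$$(l,j) * cnj (evec i l)) = (\<lambda>l. if l = i then A$$(l,j) else 0)" by (auto simp: evec_def)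
    show ?thesis unfolding e using i by simp
  qed
  have s0: "qf n A (evec i) = A$$(i,i)" unfolding evec_def using qf_one[OF i, of A 1] by simp
  show ?thesis using qf_shift[OF j, of A "evec i" t] s0 s1 s2 by simp
qed

lemma qf_evec: "i < n \<Longrightarrow> qf n A (evec i) = A$$(i,i)"
  unfolding evec_def using qf_one[of i n A 1] by simp

lemma uvec_eq: "uvec i j = (\<lambda>l. evec i l - (if l = j then -1 else 0))"
  by (auto simp: uvec_def evec_def)
lemma vvec_eq: "vvec i j = (\<lambda>l. evec i l - (if l = j then -\<i> else 0))"
  by (auto simp: vvec_def evec_def)

lemma qf_uvec: "i < n \<Longrightarrow> j < n \<Longrightarrow> qf n A (uvec i j) = A$$(i,i) + A$$(j,i) + A$$(i,j) + A$$(j,j)"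
  unfolding uvec_eq by (simp add: qf_pair)
lemma qf_vvec: "i < n \<Longrightarrow> j < n \<Longrightarrow> qf n A (vvec i j) = A$$(i,i) - \<i> * A$$(j,i) + \<i> * A$$(i,j) + A$$(j,j)"
  unfolding vvec_eq by (simp add: qf_pair)

lemma qf_determines: assumes A: "A \<in> carrier_mat n n" and B: "B \<in> carrier_mat n n"
  and eq: "\<And>c. qf n A c = qf n B c" shows "A = B"
proof (rule eq_matI)
  show "dim_row A = dim_row B" "dim_col A = dim_col B" using A B by auto
  fix i j assume "i < dim_row B" "j < dim_col B"
  then have i: "i < n" and j: "j < n" using B by auto
  have d: "A$$(k,k) = B$$(k,k)" if "k < n" for k using eq[of "evec k"] qf_evec[OF that] by metis
  have e1: "A$$(j,i) + A$$(i,j) = B$$(j,i) + B$$(i,j)"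
    using eq[of "uvec i j"] qf_uvec[OF i j, of A] qf_uvec[OF i j, of B] d[OF i] d[OF j] by simp
  have e2: "\<i> * A$$(i,j) - \<i> * A$$(j,i) = \<i> * B$$(i,j) - \<i> * B$$(j,i)"
    using eq[of "vvec i j"] qf_vvec[OF i j, of A] qf_vvec[OF i j, of B] d[OF i] d[OF j] by (simp add: algebra_simps)
  then have e3: "A$$(i,j) - A$$(j,i) = B$$(i,j) - B$$(j,i)"
    by (metis complex_i_not_zero mult_cancel_left right_diff_distrib)
  from e1 e3 show "A $$ (i,j) = B $$ (i,j)" by (auto simp: complex_eq_iff)
qed




lemma tr_Pos_real: assumes A: "A \<in> Pos n" and B: "B \<in> Pos n"
  shows "mtrace (A*B) = complex_of_real (Re (mtrace (A*B)))"
proof -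
  have Ac: "A \<in> carrier_mat n n" and Bc: "B \<in> carrier_mat n n" using A B by (auto intro: Pos_carrier)
  have "cnj (mtrace (A*B)) = (\<Sum>i<n. \<Sum>j<n. A$$(j,i) * B$$(i,j))"
    unfolding tr_mult[OF Ac Bc] cnj_sum
  proof (intro sum.cong refl)
    fix i j assume "i \<in> {..<n}" "j \<in> {..<n}"
    then have i: "i < n" and j: "j < n" by auto
    have "A$$(j,i) = cnj (A$$(i,j))" using Pos_herm[OF A i j] .
    moreover have "B$$(i,j) = cnj (B$$(j,i))" using Pos_herm[OF B j i] .
    ultimately show "cnj (A$$(i,j) * B$$(j,i)) = A$$(j,i) * B$$(i,j)" by simp
  qed
  also have "\<dots> = mtrace (A*B)" unfolding tr_mult[OF Ac Bc] by (rule sum.swap)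
  finally have e: "cnj (mtrace (A*B)) = mtrace (A*B)" .
  have "Im (mtrace (A*B)) = 0" using arg_cong[OF e, of Im] by simp
  then show ?thesis by (simp add: complex_eq_iff)
qed

lemma hs_Pos_dual: assumes A: "A \<in> Pos n" shows "hs n A \<in> Pos_dual n"
proof -
  have Ac: "A \<in> carrier_mat n n" using A by (rule Pos_carrier)
  show ?thesis unfolding Pos_dual_def hs_def
  proof (intro CollectI conjI ballI allI impI)
    fix B assume "B \<in> Pos n"
    then show "0 \<le> (if B \<in> Pos n then Re (mtrace (A * B)) else 0)" using tr_nonneg[OF A] by simp
  next
    fix B C assume B: "B \<in> Pos n" and C: "C \<in> Pos n"
    show "(if B + C \<in> Pos n then Re (mtrace (A * (B + C))) else 0) =
          (if B \<in> Pos n then Re (mtrace (A * B)) else 0) + (if C \<in> Pos n then Re (mtrace (A * C)) else 0)"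
      using B C add_Pos[OF B C] tr_add[OF Ac Pos_carrier[OF B] Pos_carrier[OF C]] by simp
  next
    fix r :: real and B assume r: "0 \<le> r" and B: "B \<in> Pos n"
    show "(if rsmult r B \<in> Pos n then Re (mtrace (A * rsmult r B)) else 0) = r * (if B \<in> Pos n then Re (mtrace (A * B)) else 0)"
      using B rsmult_Pos[OF r B] tr_smult[OF Ac Pos_carrier[OF B]] by (simp add: rsmult_def)
  next
    fix B assume "B \<notin> Pos n"
    then show "(if B \<in> Pos n then Re (mtrace (A * B)) else 0) = 0" by simp
  qed
qed

lemma hs_outer: assumes A: "A \<in> Pos n" shows "hs n A (outer n c) = Re (qf n A c)"
  unfolding hs_def using outer_Pos tr_outer[OF Pos_carrier[OF A]] by simp

lemma hs_inj: "inj_on (hs n) (Pos n)"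
proof (rule inj_onI)
  fix A B assume A: "A \<in> Pos n" and B: "B \<in> Pos n" and e: "hs n A = hs n B"
  show "A = B"
  proof (rule qf_determines[OF Pos_carrier[OF A] Pos_carrier[OF B]])
    fix c
    have "Re (qf n A c) = Re (qf n B c)" using hs_outer[OF A, of c] hs_outer[OF B, of c] e by simp
    moreover have "Im (qf n A c) = 0" "Im (qf n B c) = 0" using A B by (auto simp: Pos_iff)
    ultimately show "qf n A c = qf n B c" by (simp add: complex_eq_iff)
  qed
qed

lemma hs_surj: assumes f: "f \<in> Pos_dual n" shows "\<exists>A\<in>Pos n. hs n A = f"
proof -
  have fl: "lin_on n f" using f unfolding Pos_dual_def lin_on_def by blast
  have fadd: "\<And>A B. A \<in> Pos n \<Longrightarrow> B \<in> Pos n \<Longrightarrow> f (A+B) = f A + f B" using f unfolding Pos_dual_def by blast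
  have fsm: "\<And>r A. 0 \<le> r \<Longrightarrow> A \<in> Pos n \<Longrightarrow> f (rsmult r A) = r * f A" using f unfolding Pos_dual_def by blast
  have fpos: "\<And>B. B \<in> Pos n \<Longrightarrow> 0 \<le> f B" using f unfolding Pos_dual_def by blast
  have fout: "\<And>B. B \<notin> Pos n \<Longrightarrow> f B = 0" using f unfolding Pos_dual_def by blast
  define U where "U i j = outer n (uvec i j)" for i j
  define V where "V i j = outer n (vvec i j)" for i j
  define W where "W i = outer n (evec i)" for i
  have fU_sym: "f (U j i) = f (U i j)" for i j
  proof -
    have "uvec j i = uvec i j" by (auto simp: uvec_def)
    then show ?thesis by (simp add: U_def)
  qed
  have fU_diag: "f (U i i) = 4 * f (W i)" if i: "i < n" for i
  proof -
    have "U i i = rsmult 4 (W i)" unfolding U_def W_def rsmult_def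
      by (intro eq_matI) (auto simp: uvec_def evec_def outer_def)
    then show ?thesis using fsm[of 4 "W i"] outer_Pos by (simp add: W_def)
  qed
  have fV: "f (V i j) + f (V j i) = 2 * f (W i) + 2 * f (W j)" if i: "i < n" and j: "j < n" for i j
  proof -
    have "V i j + V j i = rsmult 2 (W i) + rsmult 2 (W j)" unfolding V_def W_def rsmult_def
      by (intro eq_matI) (auto simp: vvec_def evec_def outer_def algebra_simps)
    then have "f (V i j + V j i) = f (rsmult 2 (W i) + rsmult 2 (W j))" by simp
    then show ?thesis
      using fadd[of "V i j" "V j i"] fadd[of "rsmult 2 (W i)" "rsmult 2 (W j)"] fsm[of 2 "W i"] fsm[of 2 "W j"]
        rsmult_Pos[of 2 "W i" n] rsmult_Pos[of 2 "W j" n] outer_Pos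
      by (simp add: V_def W_def field_simps)
  qed
  define A where "A = mat n n (\<lambda>(i,j). Complex ((f (U i j) - f (W i) - f (W j))/2) ((f (W i) + f (W j) - f (V i j))/2))"
  have Ac: "A \<in> carrier_mat n n" by (simp add: A_def)
  have Aij: "A$$(i,j) = Complex ((f (U i j) - f (W i) - f (W j))/2) ((f (W i) + f (W j) - f (V i j))/2)"
    if "i < n" "j < n" for i j using that by (simp add: A_def)
  have Ah: "herm n A" unfolding herm_def
  proof (intro allI impI)
    fix i j assume i: "i < n" and j: "j < n"
    show "A$$(j,i) = cnj (A$$(i,j))" unfolding Aij[OF i j] Aij[OF j i]
      using fU_sym[of i j] fV[OF i j] by (simp add: complex_eq_iff field_simps)
  qed
  define hA where "hA X = Re (mtrace (A*X))" for X
  have hAl: "lin_on n hA" unfolding hA_def by (rule trace_lin_on[OF Ac])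
  have hAo: "hA (outer n c) = Re (qf n A c)" for c unfolding hA_def tr_outer[OF Ac] ..
  have agr: "f X = hA X" if X: "X \<in> Pos n" for X
  proof (rule agree[OF fl hAl _ _ _ X])
    fix i j assume i: "i < n" and j: "j < n"
    show "f (outer n (uvec i j)) = hA (outer n (uvec i j))"
      unfolding hAo qf_uvec[OF i j] using Aij[OF i i] Aij[OF j j] Aij[OF i j] Aij[OF j i]
        fU_diag[OF i] fU_diag[OF j] fU_sym[of i j] by (simp add: U_def W_def field_simps)
    show "f (outer n (vvec i j)) = hA (outer n (vvec i j))"
      unfolding hAo qf_vvec[OF i j] using Aij[OF i i] Aij[OF j j] Aij[OF i j] Aij[OF j i]
        fU_diag[OF i] fU_diag[OF j] fV[OF i j] by (simp add: V_def W_def field_simps)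
  next
    fix i assume i: "i < n"
    show "f (outer n (evec i)) = hA (outer n (evec i))"
      unfolding hAo qf_evec[OF i] using Aij[OF i i] fU_diag[OF i] by (simp add: W_def)
  qed
  have AP: "A \<in> Pos n" unfolding Pos_iff
  proof (intro conjI allI Ac)
    fix x :: "nat \<Rightarrow> complex"
    show "Im (qf n A x) = 0" by (rule herm_qf_real[OF Ah])
    show "0 \<le> Re (qf n A x)" using agr[OF outer_Pos, of x] hAo[of x] fpos[OF outer_Pos, of x] by simp
  qed
  have "hs n A = f"
  proof
    fix B show "hs n A B = f B"
      by (cases "B \<in> Pos n") (auto simp: hs_def agr hA_def fout)
  qed
  then show ?thesis using AP by blast
qed

lemma hs_bij: "bij_betw (hs n) (Pos n) (Pos_dual n)"
  unfolding bij_betw_def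
proof (intro conjI hs_inj equalityI subsetI)
  fix g assume "g \<in> hs n ` Pos n"
  then show "g \<in> Pos_dual n" using hs_Pos_dual by auto
next
  fix g assume "g \<in> Pos_dual n"
  then show "g \<in> hs n ` Pos n" using hs_surj by force
qed




lemma adj_carrier: "(C :: complex mat) \<in> carrier_mat m n \<Longrightarrow> mat_adjoint C \<in> carrier_mat n m"
  unfolding mat_adjoint_def by auto

lemma adj_index: "(C :: complex mat) \<in> carrier_mat m n \<Longrightarrow> i < n \<Longrightarrow> j < m \<Longrightarrow> mat_adjoint C $$ (i,j) = cnj (C $$ (j,i))"
  unfolding mat_adjoint_def by (auto simp: mat_of_rows_index)

lemma adj_adj: fixes C :: "complex mat" assumes C: "C \<in> carrier_mat m n" shows "mat_adjoint (mat_adjoint C) = C"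
  using C adj_carrier[OF C] adj_carrier[OF adj_carrier[OF C]]
  by (intro eq_matI) (auto simp: adj_index[OF adj_carrier[OF C]] adj_index[OF C])

lemma adj_mult: fixes C D :: "complex mat" assumes C: "C \<in> carrier_mat m n" and D: "D \<in> carrier_mat n k"
  shows "mat_adjoint (C * D) = mat_adjoint D * mat_adjoint C"
proof -
  have CD: "C * D \<in> carrier_mat m k" using C D by simp
  show ?thesis
  proof (rule eq_matI)
    show "dim_row (mat_adjoint (C * D)) = dim_row (mat_adjoint D * mat_adjoint C)"
      "dim_col (mat_adjoint (C * D)) = dim_col (mat_adjoint D * mat_adjoint C)"
      using adj_carrier[OF CD] adj_carrier[OF C] adj_carrier[OF D] by auto
    fix i j assume "i < dim_row (mat_adjoint D * mat_adjoint C)" "j < dim_col (mat_adjoint D * mat_adjoint C)"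
    then have i: "i < k" and j: "j < m" using adj_carrier[OF C] adj_carrier[OF D] by auto
    show "mat_adjoint (C * D) $$ (i, j) = (mat_adjoint D * mat_adjoint C) $$ (i, j)"
      using i j C D adj_carrier[OF C] adj_carrier[OF D]
      by (auto simp: adj_index[OF CD] adj_index[OF C] adj_index[OF D] scalar_prod_def cnj_sum mult.commute
          intro!: sum.cong)
  qed
qed

lemma adj_one: "mat_adjoint (1\<^sub>m n :: complex mat) = 1\<^sub>m n"
  using adj_carrier[of "1\<^sub>m n" n n]
  by (intro eq_matI) (auto simp: adj_index[of "1\<^sub>m n" n n])

lemma hinner_adj: assumes C: "C \<in> carrier_mat m n" and u: "u \<in> carrier_vec n" and x: "x \<in> carrier_vec m"
  shows "hinner (C *\<^sub>v u) x = hinner u (mat_adjoint C *\<^sub>v x)"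
proof -
  have "hinner (C *\<^sub>v u) x = (\<Sum>p<m. (\<Sum>a<n. C$$(p,a) * u$a) * cnj (x$p))"
    unfolding hinner_def using C u x by (auto simp: scalar_prod_def atLeast0LessThan intro!: sum.cong)
  also have "\<dots> = (\<Sum>p<m. \<Sum>a<n. u$a * (C$$(p,a) * cnj (x$p)))"
    by (simp add: sum_distrib_left sum_distrib_right mult_ac)
  also have "\<dots> = (\<Sum>a<n. \<Sum>p<m. u$a * (C$$(p,a) * cnj (x$p)))" by (rule sum.swap)
  also have "\<dots> = (\<Sum>a<n. u$a * cnj (\<Sum>p<m. cnj (C$$(p,a)) * x$p))"
    by (simp add: sum_distrib_left cnj_sum)
  also have "\<dots> = hinner u (mat_adjoint C *\<^sub>v x)"
    unfolding hinner_def using C u x adj_carrier[OF C]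
    by (auto simp: scalar_prod_def atLeast0LessThan adj_index[OF C] intro!: sum.cong)
  finally show ?thesis .
qed

lemma PosMap_Pos: assumes C: "C \<in> carrier_mat m n" and A: "A \<in> Pos n" shows "PosMap C A \<in> Pos m"
proof -
  have Ac: "A \<in> carrier_mat n n" using A by (rule Pos_carrier)
  have Cd: "mat_adjoint C \<in> carrier_mat n m" by (rule adj_carrier[OF C])
  show ?thesis unfolding Pos_def PosMap_def
  proof (intro CollectI conjI ballI)
    show "C * A * mat_adjoint C \<in> carrier_mat m m" using C Ac Cd by auto
    fix x :: "complex vec" assume x: "x \<in> carrier_vec m"
    define y where "y = mat_adjoint C *\<^sub>v x"
    have y: "y \<in> carrier_vec n" unfolding y_def using Cd x by simp
    have "(C * A * mat_adjoint C) *\<^sub>v x = C *\<^sub>v (A *\<^sub>v y)"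
      unfolding y_def using C Ac Cd x by (simp add: assoc_mult_mat_vec[of _ m n _ m])
    then have e: "hinner ((C * A * mat_adjoint C) *\<^sub>v x) x = hinner (A *\<^sub>v y) y"
      using hinner_adj[OF C _ x, of "A *\<^sub>v y"] Ac y unfolding y_def by simp
    have "Im (hinner (A *\<^sub>v y) y) = 0 \<and> 0 \<le> Re (hinner (A *\<^sub>v y) y)" using A y unfolding Pos_def by blast
    then show "Im (hinner ((C * A * mat_adjoint C) *\<^sub>v x) x) = 0"
      "0 \<le> Re (hinner ((C * A * mat_adjoint C) *\<^sub>v x) x)" unfolding e by auto
  qed
qed




lemma hs_add: assumes A: "A \<in> Pos n" and B: "B \<in> Pos n"
  shows "hs n (A + B) = (\<lambda>X. hs n A X + hs n B X)"
proof
  fix X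
  have Ac: "A \<in> carrier_mat n n" and Bc: "B \<in> carrier_mat n n" using A B by (auto intro: Pos_carrier)
  show "hs n (A + B) X = hs n A X + hs n B X"
  proof (cases "X \<in> Pos n")
    case True
    have Xc: "X \<in> carrier_mat n n" using True by (rule Pos_carrier)
    have "mtrace ((A + B) * X) = mtrace (A*X) + mtrace (B*X)"
      using tr_comm[OF Ac Xc] tr_comm[OF Bc Xc] tr_comm[of "A+B" n n X] tr_add[OF Xc Ac Bc] Ac Bc Xc by simp
    then show ?thesis using True by (simp add: hs_def)
  qed (simp add: hs_def)
qed

lemma hs_smult: assumes r: "0 \<le> r" and A: "A \<in> Pos n"
  shows "hs n (rsmult r A) = (\<lambda>X. r * hs n A X)"
proof
  fix X
  have Ac: "A \<in> carrier_mat n n" using A by (rule Pos_carrier)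
  show "hs n (rsmult r A) X = r * hs n A X"
  proof (cases "X \<in> Pos n")
    case True
    have Xc: "X \<in> carrier_mat n n" using True by (rule Pos_carrier)
    have "mtrace (rsmult r A * X) = complex_of_real r * mtrace (A*X)"
      using tr_comm[OF Ac Xc] tr_comm[of "rsmult r A" n n X] tr_smult[OF Xc Ac] Ac Xc by (simp add: rsmult_def)
    then show ?thesis using True by (simp add: hs_def)
  qed (simp add: hs_def)
qed

lemma PosMap_add: assumes C: "C \<in> carrier_mat m n" and A: "A \<in> Pos n" and B: "B \<in> Pos n"
  shows "PosMap C (A + B) = PosMap C A + PosMap C B"
proof -
  have Ac: "A \<in> carrier_mat n n" and Bc: "B \<in> carrier_mat n n" using A B by (auto intro: Pos_carrier)
  have Cd: "mat_adjoint C \<in> carrier_mat n m" by (rule adj_carrier[OF C])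
  have "C * (A + B) = C * A + C * B" using C Ac Bc by (rule mult_add_distrib_mat)
  moreover have "(C * A + C * B) * mat_adjoint C = C * A * mat_adjoint C + C * B * mat_adjoint C"
    using C Ac Bc Cd by (intro add_mult_distrib_mat) auto
  ultimately show ?thesis unfolding PosMap_def by simp
qed

lemma PosMap_smult: assumes C: "C \<in> carrier_mat m n" and A: "A \<in> Pos n"
  shows "PosMap C (rsmult r A) = rsmult r (PosMap C A)"
proof -
  have Ac: "A \<in> carrier_mat n n" using A by (rule Pos_carrier)
  have Cd: "mat_adjoint C \<in> carrier_mat n m" by (rule adj_carrier[OF C])
  have "C * (complex_of_real r \<cdot>\<^sub>m A) = complex_of_real r \<cdot>\<^sub>m (C * A)" using C Ac by (rule mult_smult_distrib)
  moreover have "(complex_of_real r \<cdot>\<^sub>m (C * A)) * mat_adjoint C = complex_of_real r \<cdot>\<^sub>m (C * A * mat_adjoint C)"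
    using C Ac Cd by (intro mult_smult_assoc_mat) auto
  ultimately show ?thesis unfolding PosMap_def rsmult_def by simp
qed

lemma PosMap_comp: assumes C: "C \<in> carrier_mat m n" and D: "D \<in> carrier_mat n k" and A: "A \<in> Pos k"
  shows "PosMap (C * D) A = PosMap C (PosMap D A)"
proof -
  have Ac: "A \<in> carrier_mat k k" using A by (rule Pos_carrier)
  have Cd: "mat_adjoint C \<in> carrier_mat n m" by (rule adj_carrier[OF C])
  have Dd: "mat_adjoint D \<in> carrier_mat k n" by (rule adj_carrier[OF D])
  have DA: "D * A \<in> carrier_mat n k" using D Ac by simp
  have DdCd: "mat_adjoint D * mat_adjoint C \<in> carrier_mat k m" using Dd Cd by simp
  have DAD: "D * A * mat_adjoint D \<in> carrier_mat n n" using DA Dd by simp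
  have s1: "(C*D)*A = C*(D*A)" by (rule assoc_mult_mat[OF C D Ac])
  have s2: "C*(D*A)*(mat_adjoint D * mat_adjoint C) = C*((D*A)*(mat_adjoint D * mat_adjoint C))"
    by (rule assoc_mult_mat[OF C DA DdCd])
  have s3: "(D*A)*(mat_adjoint D * mat_adjoint C) = ((D*A)*mat_adjoint D)*mat_adjoint C"
    by (rule assoc_mult_mat[OF DA Dd Cd, symmetric])
  have s4: "C*(((D*A)*mat_adjoint D)*mat_adjoint C) = (C*((D*A)*mat_adjoint D))*mat_adjoint C"
    by (rule assoc_mult_mat[OF C DAD Cd, symmetric])
  show ?thesis unfolding PosMap_def adj_mult[OF C D] s1 s2 s3 s4 ..
qed

lemma PosMap_one: assumes A: "A \<in> Pos n" shows "PosMap (1\<^sub>m n) A = A"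
  using Pos_carrier[OF A] unfolding PosMap_def adj_one by simp

lemma naturality: assumes C: "C \<in> carrier_mat m n" and A: "A \<in> Pos m"
  shows "dualmap n (PosMap C) (hs m A) = hs n (PosMap (mat_adjoint C) A)"
proof
  fix B
  have Ac: "A \<in> carrier_mat m m" using A by (rule Pos_carrier)
  have Cd: "mat_adjoint C \<in> carrier_mat n m" by (rule adj_carrier[OF C])
  show "dualmap n (PosMap C) (hs m A) B = hs n (PosMap (mat_adjoint C) A) B"
  proof (cases "B \<in> Pos n")
    case True
    have Bc: "B \<in> carrier_mat n n" using True by (rule Pos_carrier)
    have PB: "PosMap C B \<in> Pos m" using PosMap_Pos[OF C True] .
    have CB: "C * B \<in> carrier_mat m n" using C Bc by simp
    have CdA: "mat_adjoint C * A \<in> carrier_mat n m" using Cd Ac by simp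
    have "mtrace (A * (C * B * mat_adjoint C)) = mtrace ((A * (C * B)) * mat_adjoint C)"
      by (simp only: assoc_mult_mat[OF Ac CB Cd])
    also have "\<dots> = mtrace (mat_adjoint C * (A * (C * B)))"
      by (rule tr_comm[of _ m n]) (use Ac C Bc Cd in auto)
    also have "\<dots> = mtrace (mat_adjoint C * A * C * B)"
      by (simp only: assoc_mult_mat[OF Cd Ac CB] assoc_mult_mat[OF CdA C Bc])
    finally have e: "mtrace (A * (C * B * mat_adjoint C)) = mtrace (mat_adjoint C * A * C * B)" .
    show ?thesis using True PB e unfolding dualmap_def hs_def PosMap_def adj_adj[OF C] by simp
  qed (simp add: dualmap_def hs_def)
qed

lemma unit_compat: assumes A: "A \<in> Pos n" shows "dualmap n (hs n) (ev n A) = hs n A"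
proof
  fix B
  show "dualmap n (hs n) (ev n A) B = hs n A B"
  proof (cases "B \<in> Pos n")
    case True
    have "hs n B \<in> Pos_dual n" using hs_Pos_dual[OF True] .
    then have "dualmap n (hs n) (ev n A) B = hs n B A" using True by (simp add: dualmap_def ev_def)
    also have "\<dots> = hs n A B"
      using A True tr_comm[OF Pos_carrier[OF True] Pos_carrier[OF A]] by (simp add: hs_def)
    finally show ?thesis .
  qed (simp add: dualmap_def hs_def)
qed

theorem proposition2p3:
  fixes n m k :: nat and C D :: "complex mat"
  assumes C: "C \<in> carrier_mat m n" and D: "D \<in> carrier_mat n k"
  shows
    \<comment> \<open>Pos(n) is an R>=0-module (submodule of the matrices)\<close>
    "0\<^sub>m n n \<in> Pos n
     \<and> (\<forall>A \<in> Pos n. \<forall>B \<in> Pos n. A + B \<in> Pos n)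
     \<and> (\<forall>r \<ge> 0. \<forall>A \<in> Pos n. rsmult r A \<in> Pos n)
    \<comment> \<open>hs is well defined: tr(AB) is a non-negative real and hs A is linear\<close>
     \<and> (\<forall>A \<in> Pos n. \<forall>B \<in> Pos n. mtrace (A * B) = complex_of_real (hs n A B))
     \<and> (\<forall>A \<in> Pos n. hs n A \<in> Pos_dual n)
    \<comment> \<open>hs is a morphism of R>=0-modules\<close>
     \<and> (\<forall>A \<in> Pos n. \<forall>B \<in> Pos n. hs n (A + B) = (\<lambda>X. hs n A X + hs n B X))
     \<and> (\<forall>r \<ge> 0. \<forall>A \<in> Pos n. hs n (rsmult r A) = (\<lambda>X. r * hs n A X))
    \<comment> \<open>hs is an isomorphism\<close>
     \<and> bij_betw (hs n) (Pos n) (Pos_dual n)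
    \<comment> \<open>Pos is a functor FdHilb -> Mod_R>=0\<close>
     \<and> (\<forall>A \<in> Pos n. PosMap C A \<in> Pos m)
     \<and> (\<forall>A \<in> Pos n. \<forall>B \<in> Pos n. PosMap C (A + B) = PosMap C A + PosMap C B)
     \<and> (\<forall>r \<ge> 0. \<forall>A \<in> Pos n. PosMap C (rsmult r A) = rsmult r (PosMap C A))
     \<and> (\<forall>A \<in> Pos k. PosMap (C * D) A = PosMap C (PosMap D A))
     \<and> (\<forall>A \<in> Pos n. PosMap (1\<^sub>m n) A = A)
    \<comment> \<open>naturality: Pos(C)^* o hs_K = hs_H o Pos(C^dagger)\<close>
     \<and> (\<forall>A \<in> Pos m. dualmap n (PosMap C) (hs m A) = hs n (PosMap (mat_adjoint C) A))
    \<comment> \<open>compatibility with the units (map of adjunctions): hs^* o ev = hs o id\<close>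
     \<and> (\<forall>A \<in> Pos n. dualmap n (hs n) (ev n A) = hs n A)"
proof -
  have g4: "\<forall>A \<in> Pos n. \<forall>B \<in> Pos n. mtrace (A * B) = complex_of_real (hs n A B)"
    using tr_Pos_real by (simp add: hs_def)
  have g2: "\<forall>A \<in> Pos n. \<forall>B \<in> Pos n. A + B \<in> Pos n" using add_Pos by blast
  have g3: "\<forall>r \<ge> 0. \<forall>A \<in> Pos n. rsmult r A \<in> Pos n" using rsmult_Pos by blast
  have g5: "\<forall>A \<in> Pos n. hs n A \<in> Pos_dual n" using hs_Pos_dual by blast
  have g6: "\<forall>A \<in> Pos n. \<forall>B \<in> Pos n. hs n (A + B) = (\<lambda>X. hs n A X + hs n B X)" using hs_add by blast
  have g7: "\<forall>r \<ge> 0. \<forall>A \<in> Pos n. hs n (rsmult r A) = (\<lambda>X. r * hs n A X)" using hs_smult by blast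
  have g9: "\<forall>A \<in> Pos n. PosMap C A \<in> Pos m" using PosMap_Pos[OF C] by blast
  have g10: "\<forall>A \<in> Pos n. \<forall>B \<in> Pos n. PosMap C (A + B) = PosMap C A + PosMap C B" using PosMap_add[OF C] by blast
  have g11: "\<forall>r \<ge> 0. \<forall>A \<in> Pos n. PosMap C (rsmult r A) = rsmult r (PosMap C A)" using PosMap_smult[OF C] by blast
  have g12: "\<forall>A \<in> Pos k. PosMap (C * D) A = PosMap C (PosMap D A)" using PosMap_comp[OF C D] by blast
  have g13: "\<forall>A \<in> Pos n. PosMap (1\<^sub>m n) A = A" using PosMap_one by blast
  have g14: "\<forall>A \<in> Pos m. dualmap n (PosMap C) (hs m A) = hs n (PosMap (mat_adjoint C) A)" using naturality[OF C] by blast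
  have g15: "\<forall>A \<in> Pos n. dualmap n (hs n) (ev n A) = hs n A" using unit_compat by blast
  show ?thesis by (intro conjI zero_Pos g2 g3 g4 g5 g6 g7 hs_bij g9 g10 g11 g12 g13 g14 g15)
qed


end
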